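(* Let $H$ be a complex Hilbert space and $\{\mathcal{U}(t)\}_{t\geq 0}$ a strongly continuous semigroup on $H$ with generator $\mathcal{L}$. Let $z\in D(\mathcal{L})$ with $z\neq 0$, let $\mathcal{P}:=(\cdot,z)(z,z)^{-1}z$ and $\mathcal{Q}:=1-\mathcal{P}$. Let $\{e^{\mathcal{LQ}t}\}_{t\geq 0}$ denote the strongly continuous semigroup generated by the operator $\mathcal{LQ}$ (with domain $D(\mathcal{LQ})=\{x\in H:\mathcal{Q}x\in D(\mathcal{L})\}$). Then $\{\mathcal{G}(t):=\mathcal{P}+\mathcal{Q}e^{\mathcal{LQ}t}\}_{t\geq 0}$ is a strongly continuous semigroup on $H$.
   Context: The scalar product $(\cdot,\cdot)$ on $H$ is conjugate-linear in its second argument. The generator is defined by $\mathcal{L}x:=\lim_{h\searrow 0}\frac1h[\mathcal{U}(h)x-x]$ on the domain $D(\mathcal{L})$ of all $x$ for which this limit exists in $H$. The notation $\{e^{\mathcal{A}t}\}_{t\ge0}$ means the strongly continuous semigroup generated by $\mathcal{A}$ (not an exponential series). *)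

theory Defs
  imports "HOL-Analysis.Analysis"
begin

definition complex_hilbert :: "(complex \<Rightarrow> 'a::banach \<Rightarrow> 'a) \<Rightarrow> ('a \<Rightarrow> 'a \<Rightarrow> complex) \<Rightarrow> bool" where
  "complex_hilbert sc ip \<longleftrightarrow>
     (\<forall>r x. sc (complex_of_real r) x = r *\<^sub>R x) \<and>
     (\<forall>a x y. sc a (x + y) = sc a x + sc a y) \<and>
     (\<forall>a b x. sc (a + b) x = sc a x + sc b x) \<and>
     (\<forall>a b x. sc a (sc b x) = sc (a * b) x) \<and>
     (\<forall>x y w. ip (x + y) w = ip x w + ip y w) \<and>
     (\<forall>c x y. ip (sc c x) y = c * ip x y) \<and>
     (\<forall>x y. ip y x = cnj (ip x y)) \<and>
     (\<forall>x. Im (ip x x) = 0 \<and> Re (ip x x) \<ge> 0) \<and>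
     (\<forall>x. ip x x = 0 \<longleftrightarrow> x = 0) \<and>
     (\<forall>x. norm x = sqrt (Re (ip x x)))"

definition cbounded_linear :: "(complex \<Rightarrow> 'a::banach \<Rightarrow> 'a) \<Rightarrow> ('a \<Rightarrow> 'a) \<Rightarrow> bool" where
  "cbounded_linear sc T \<longleftrightarrow> bounded_linear T \<and> (\<forall>c x. T (sc c x) = sc c (T x))"

text \<open>Strongly continuous semigroup (only the values for t \<ge> 0 matter).\<close>
definition C0_semigroup :: "(complex \<Rightarrow> 'a::banach \<Rightarrow> 'a) \<Rightarrow> (real \<Rightarrow> 'a \<Rightarrow> 'a) \<Rightarrow> bool" where
  "C0_semigroup sc U \<longleftrightarrow>
     (\<forall>t\<ge>0. cbounded_linear sc (U t)) \<and>
     U 0 = id \<and>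
     (\<forall>s\<ge>0. \<forall>t\<ge>0. U (s + t) = U s \<circ> U t) \<and>
     (\<forall>x. continuous_on {0..} (\<lambda>t. U t x))"

definition gen_domain :: "(real \<Rightarrow> 'a::real_normed_vector \<Rightarrow> 'a) \<Rightarrow> 'a set" where
  "gen_domain U = {x. \<exists>y. ((\<lambda>h. (1 / h) *\<^sub>R (U h x - x)) \<longlongrightarrow> y) (at_right 0)}"

definition generator :: "(real \<Rightarrow> 'a::real_normed_vector \<Rightarrow> 'a) \<Rightarrow> 'a \<Rightarrow> 'a" where
  "generator U x = Lim (at_right 0) (\<lambda>h. (1 / h) *\<^sub>R (U h x - x))"

definition generated_by :: "(real \<Rightarrow> 'a::real_normed_vector \<Rightarrow> 'a) \<Rightarrow> 'a set \<Rightarrow> ('a \<Rightarrow> 'a) \<Rightarrow> bool" where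
  "generated_by U D A \<longleftrightarrow> gen_domain U = D \<and> (\<forall>x\<in>D. generator U x = A x)"

end

theory Submission
  imports Defs
begin

lemma right_deriv_zero_bound:
  fixes f :: "real \<Rightarrow> 'a::real_normed_vector"
  assumes cont: "continuous_on {0..} f" and f0: "f 0 = 0"
    and der: "\<And>s. s \<ge> 0 \<Longrightarrow> ((\<lambda>h. (1/h) *\<^sub>R (f (s+h) - f s)) \<longlongrightarrow> 0) (at_right 0)"
    and e: "e > 0" and t1: "t1 \<ge> 0"
  shows "norm (f t1) \<le> e * t1"
proof (rule ccontr)
  assume nt: "\<not> norm (f t1) \<le> e * t1"
  define A where "A = {t \<in> {0..t1}. norm (f t) \<le> e * t}"
  have "continuous_on {0..t1} (\<lambda>t. norm (f t) - e * t)"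
    by (intro continuous_intros continuous_on_subset[OF cont]) auto
  then have "closed ({0..t1} \<inter> (\<lambda>t. norm (f t) - e * t) -` {..0})"
    by (rule continuous_closed_preimage) auto
  moreover have "{0..t1} \<inter> (\<lambda>t. norm (f t) - e * t) -` {..0} = A" unfolding A_def by auto
  ultimately have "closed A" by simp
  then have cA: "compact A" unfolding A_def
    by (metis (no_types, lifting) A_def bounded_closed_interval bounded_subset compact_eq_bounded_closed mem_Collect_eq subsetI)
  have "0 \<in> A" using f0 t1 by (simp add: A_def)
  then obtain s where sA: "s \<in> A" and smax: "\<And>t. t \<in> A \<Longrightarrow> t \<le> s"
    using compact_attains_sup[OF cA] by blast
  have s0: "s \<ge> 0" and st: "s \<le> t1" and fs: "norm (f s) \<le> e * s" using sA by (auto simp: A_def)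
  have "s \<noteq> t1" using nt sA by (auto simp: A_def)
  with st have slt: "s < t1" by simp
  have ev1: "\<forall>\<^sub>F h in at_right 0. norm ((1/h) *\<^sub>R (f (s+h) - f s)) < e"
    using der[OF s0] e by (simp add: tendsto_iff dist_norm)
  have ev2: "\<forall>\<^sub>F h in at_right 0. h \<in> {0<..<t1 - s}"
    using eventually_at_right_real slt by simp
  obtain h where h1: "norm ((1/h) *\<^sub>R (f (s+h) - f s)) < e" and h2: "h \<in> {0<..<t1 - s}"
    using eventually_happens'[OF _ eventually_conj[OF ev1 ev2]] by auto
  have hp: "h > 0" using h2 by auto
  have "norm (f (s+h) - f s) < e * h" proof -
    have "norm ((1/h) *\<^sub>R (f (s+h) - f s)) = norm (f (s+h) - f s) / h" using hp by simp
    then show ?thesis using h1 hp by (simp add: divide_less_eq mult.commute)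
  qed
  then have "norm (f (s+h)) < e * (s + h)" using fs
    by (smt (verit, ccfv_SIG) distrib_left norm_triangle_ineq2)
  then have "s + h \<in> A" using hp h2 s0 by (auto simp: A_def)
  then show False using smax hp by fastforce
qed

lemma right_deriv_zero:
  fixes f :: "real \<Rightarrow> 'a::real_normed_vector"
  assumes cont: "continuous_on {0..} f" and f0: "f 0 = 0"
    and der: "\<And>s. s \<ge> 0 \<Longrightarrow> ((\<lambda>h. (1/h) *\<^sub>R (f (s+h) - f s)) \<longlongrightarrow> 0) (at_right 0)"
    and t: "t \<ge> 0"
  shows "f t = 0"
proof -
  have "norm (f t) \<le> e" if "e > 0" for e
  proof -
    have "norm (f t) \<le> (e / (t+1)) * t"
      using right_deriv_zero_bound[OF cont f0 der, of "e/(t+1)" t] that t by auto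
    also have "\<dots> \<le> e" using that t by (simp add: field_simps)
    finally show ?thesis .
  qed
  then show ?thesis by (metis field_le_epsilon norm_ge_zero norm_le_zero_iff add_0)
qed


theorem lemma1:
  fixes sc :: "complex \<Rightarrow> 'a::banach \<Rightarrow> 'a"
    and ip :: "'a \<Rightarrow> 'a \<Rightarrow> complex"
    and U V :: "real \<Rightarrow> 'a \<Rightarrow> 'a"
    and z :: 'a
    and P Q :: "'a \<Rightarrow> 'a"
  assumes H: "complex_hilbert sc ip"
    and U: "C0_semigroup sc U"
    and z: "z \<in> gen_domain U" "z \<noteq> 0"
    and P_def: "P = (\<lambda>x. sc (ip x z / ip z z) z)"
    and Q_def: "Q = (\<lambda>x. x - P x)"
    and V: "C0_semigroup sc V"
    and V_gen: "generated_by V {x. Q x \<in> gen_domain U} (\<lambda>x. generator U (Q x))"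
  shows "C0_semigroup sc (\<lambda>t x. P x + Q (V t x))"
proof -
  note Hd = H[unfolded complex_hilbert_def]
  have sc_real: "sc (complex_of_real r) x = r *\<^sub>R x" for r x using Hd[THEN conjunct1] by blast
  have sc_one: "sc 1 x = x" for x using sc_real[of 1 x] by simp
  have sc_add: "sc a (x + y) = sc a x + sc a y" for a x y using Hd[THEN conjunct2, THEN conjunct1] by blast
  have sc_addl: "sc (a + b) x = sc a x + sc b x" for a b x using Hd[THEN conjunct2, THEN conjunct2, THEN conjunct1] by blast
  have sc_mult: "sc a (sc b x) = sc (a * b) x" for a b x using Hd[THEN conjunct2, THEN conjunct2, THEN conjunct2, THEN conjunct1] by blast
  have sc_diff: "sc a (x - y) = sc a x - sc a y" for a x y
    using sc_add[of a "x - y" y] by (simp add: eq_diff_eq)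
  have ip_add: "ip (x + y) w = ip x w + ip y w" for x y w using Hd[THEN conjunct2, THEN conjunct2, THEN conjunct2, THEN conjunct2, THEN conjunct1] by blast
  have ip_sc: "ip (sc c x) y = c * ip x y" for c x y using Hd[THEN conjunct2, THEN conjunct2, THEN conjunct2, THEN conjunct2, THEN conjunct2, THEN conjunct1] by blast
  have ip_cnj: "ip y x = cnj (ip x y)" for x y using Hd[THEN conjunct2, THEN conjunct2, THEN conjunct2, THEN conjunct2, THEN conjunct2, THEN conjunct2, THEN conjunct1] by blast
  have ip_diff: "ip (x - y) w = ip x w - ip y w" for x y w
    using ip_add[of "x - y" y w] by (simp add: eq_diff_eq)
  have ip_add_r: "ip w (x + y) = ip w x + ip w y" for x y w
    using ip_cnj[of w "x+y"] ip_add[of x y w] ip_cnj[of w x] ip_cnj[of w y] by simp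
  have ip_sc_r: "ip x (sc c y) = cnj c * ip x y" for c x y
    using ip_cnj[of x "sc c y"] ip_sc[of c y x] ip_cnj[of x y] by simp
  have ip_pos: "Im (ip x x) = 0 \<and> Re (ip x x) \<ge> 0" for x using Hd[THEN conjunct2, THEN conjunct2, THEN conjunct2, THEN conjunct2, THEN conjunct2, THEN conjunct2, THEN conjunct2, THEN conjunct1] by blast
  have ip_zero: "ip x x = 0 \<longleftrightarrow> x = 0" for x using Hd[THEN conjunct2, THEN conjunct2, THEN conjunct2, THEN conjunct2, THEN conjunct2, THEN conjunct2, THEN conjunct2, THEN conjunct2, THEN conjunct1] by blast
  have nrm: "norm x = sqrt (Re (ip x x))" for x using Hd[THEN conjunct2, THEN conjunct2, THEN conjunct2, THEN conjunct2, THEN conjunct2, THEN conjunct2, THEN conjunct2, THEN conjunct2, THEN conjunct2] by blast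
  have nrm2: "(norm x)^2 = Re (ip x x)" for x using nrm[of x] ip_pos[of x] by simp
  have zz: "ip z z \<noteq> 0" using ip_zero z(2) by simp
  define c where "c x = ip x z / ip z z" for x
  have Pc: "P x = sc (c x) z" for x by (simp add: P_def c_def)
  have Pz: "P z = z" using zz by (simp add: P_def sc_one)
  have Qz: "Q z = 0" using Pz by (simp add: Q_def)
  have P_add: "P (x + y) = P x + P y" for x y
    by (simp add: P_def ip_add add_divide_distrib sc_addl)
  have P_sc: "P (sc a x) = sc a (P x)" for a x
    by (simp add: P_def ip_sc sc_mult)
  have P_scaleR: "P (r *\<^sub>R x) = r *\<^sub>R P x" for r x
    using P_sc[of "complex_of_real r" x] by (simp add: sc_real)
  have ipQz: "ip (Q x) z = 0" for x
    using zz by (simp add: Q_def P_def ip_diff ip_sc)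
  have ipPQ: "ip (P x) (Q x) = 0" for x
    using ipQz[of x] ip_cnj[of "Q x" z] by (simp add: Pc ip_sc)
  have ipQP: "ip (Q x) (P x) = 0" for x
    using ipQz[of x] by (simp add: Pc ip_sc_r)
  have decomp: "x = P x + Q x" for x by (simp add: Q_def)
  have pyth: "(norm x)^2 = (norm (P x))^2 + (norm (Q x))^2" for x
  proof -
    have "ip x x = ip (P x + Q x) (P x + Q x)" by (simp add: Q_def)
    also have "\<dots> = ip (P x) (P x) + ip (Q x) (Q x)"
      by (simp add: ip_add ip_add_r ipPQ ipQP)
    finally show ?thesis by (simp add: nrm2)
  qed
  have Pb: "norm (P x) \<le> norm x" for x
    proof -
    have "(norm (P x))^2 \<le> (norm x)^2" using pyth[of x] by simp
    then show ?thesis by (rule power2_le_imp_le) simp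
  qed
  have blP: "bounded_linear P"
  proof
    show "P (x + y) = P x + P y" for x y by (rule P_add)
    show "P (r *\<^sub>R x) = r *\<^sub>R P x" for r x by (rule P_scaleR)
    show "\<exists>K. \<forall>x. norm (P x) \<le> norm x * K" using Pb by (metis mult.right_neutral)
  qed
  have blQ: "bounded_linear Q" unfolding Q_def
    by (intro bounded_linear_sub bounded_linear_ident blP)
  have Q_sc: "Q (sc a x) = sc a (Q x)" for a x by (simp add: Q_def P_sc sc_diff)
  have PP: "P (P x) = P x" for x using P_sc[of "c x" z] Pz by (simp add: Pc)
  have PQ: "P (Q x) = 0" for x
    using PP[of x] linear_diff[OF bounded_linear.linear[OF blP]] by (simp add: Q_def)
  have QP: "Q (P x) = 0" for x by (simp add: Q_def PP)
  note Vd = V[unfolded C0_semigroup_def cbounded_linear_def]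
  have Vbl: "t \<ge> 0 \<Longrightarrow> bounded_linear (V t)" for t by (simp add: Vd)
  have Vsc: "t \<ge> 0 \<Longrightarrow> V t (sc a x) = sc a (V t x)" for t a x by (simp add: Vd)
  have V0: "V 0 = id" by (simp add: Vd)
  have Vsg: "s \<ge> 0 \<Longrightarrow> t \<ge> 0 \<Longrightarrow> V (s + t) = V s \<circ> V t" for s t by (simp add: Vd)
  have Vcont: "continuous_on {0..} (\<lambda>t. V t x)" for x by (simp add: Vd)
  have gU0: "generator U 0 = 0"
  proof -
    note Ud = U[unfolded C0_semigroup_def cbounded_linear_def]
    have "U h 0 = 0" if "h \<ge> 0" for h using Ud that linear_0[OF bounded_linear.linear] by blast
    then have "\<forall>\<^sub>F h in at_right (0::real). (1 / h) *\<^sub>R (U h 0 - 0) = 0"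
      using eventually_at_right_less[of "0::real"] by (auto elim: eventually_mono)
    then have "((\<lambda>h. (1 / h) *\<^sub>R (U h 0 - 0)) \<longlongrightarrow> 0) (at_right 0)"
      by (rule tendsto_eventually)
    then show ?thesis unfolding generator_def by (intro tendsto_Lim) auto
  qed
  have U00: "U h 0 = 0" if h: "h \<ge> 0" for h
  proof -
    have "bounded_linear (U h)" using U h unfolding C0_semigroup_def cbounded_linear_def by blast
    then show ?thesis by (rule linear_0[OF bounded_linear.linear])
  qed
  have z0dom: "(0::'a) \<in> gen_domain U"
  proof -
    have "\<forall>\<^sub>F h in at_right (0::real). (1 / h) *\<^sub>R (U h 0 - 0) = 0"
      using eventually_at_right_less[of "0::real"] by (auto elim!: eventually_mono simp: U00)
    then have "((\<lambda>h. (1 / h) *\<^sub>R (U h 0 - 0)) \<longlongrightarrow> 0) (at_right 0)"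
      by (rule tendsto_eventually)
    then show ?thesis unfolding gen_domain_def by blast
  qed
  have zV: "z \<in> gen_domain V" using V_gen Qz z0dom by (simp add: generated_by_def)
  have gVz: "generator V z = 0" using V_gen Qz z0dom gU0 by (simp add: generated_by_def)
  have limz: "((\<lambda>h. (1 / h) *\<^sub>R (V h z - z)) \<longlongrightarrow> 0) (at_right 0)"
  proof -
    obtain y where y: "((\<lambda>h. (1 / h) *\<^sub>R (V h z - z)) \<longlongrightarrow> y) (at_right 0)"
      using zV unfolding gen_domain_def by blast
    then have "generator V z = y" unfolding generator_def by (intro tendsto_Lim) auto
    then show ?thesis using y gVz by simp
  qed
  have Vz: "V t z = z" if t: "t \<ge> 0" for t
  proof -
    define f where "f t = V t z - z" for t
    have "continuous_on {0..} f" unfolding f_def by (intro continuous_intros Vcont)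
    moreover have "f 0 = 0" by (simp add: f_def V0)
    moreover have "((\<lambda>h. (1/h) *\<^sub>R (f (s+h) - f s)) \<longlongrightarrow> 0) (at_right 0)" if s: "s \<ge> 0" for s
    proof -
      have "((\<lambda>h. V s ((1 / h) *\<^sub>R (V h z - z))) \<longlongrightarrow> V s 0) (at_right 0)"
        by (rule bounded_linear.tendsto[OF Vbl[OF s] limz])
      then have L: "((\<lambda>h. V s ((1 / h) *\<^sub>R (V h z - z))) \<longlongrightarrow> 0) (at_right 0)"
        using linear_0[OF bounded_linear.linear[OF Vbl[OF s]]] by simp
      have E: "\<forall>\<^sub>F h in at_right (0::real). V s ((1 / h) *\<^sub>R (V h z - z)) = (1/h) *\<^sub>R (f (s+h) - f s)"
        using eventually_at_right_less[of "0::real"]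
      proof (rule eventually_mono)
        fix h :: real assume h: "0 < h"
        have "V s ((1 / h) *\<^sub>R (V h z - z)) = (1 / h) *\<^sub>R (V s (V h z) - V s z)"
          using linear_diff[OF bounded_linear.linear[OF Vbl[OF s]]]
            linear_scale[OF bounded_linear.linear[OF Vbl[OF s]]] by simp
        also have "V s (V h z) = V (s + h) z" using Vsg[OF s, of h] h by simp
        finally show "V s ((1 / h) *\<^sub>R (V h z - z)) = (1/h) *\<^sub>R (f (s+h) - f s)"
          by (simp add: f_def)
      qed
      show ?thesis by (rule tendsto_cong[OF E, THEN iffD1, OF L])
    qed
    ultimately have "f t = 0" using right_deriv_zero t by blast
    then show ?thesis by (simp add: f_def)
  qed
  have VP: "t \<ge> 0 \<Longrightarrow> V t (P x) = P x" for t x by (simp add: Pc Vsc Vz)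
  show ?thesis
    unfolding C0_semigroup_def cbounded_linear_def
  proof (intro conjI allI impI ballI)
    fix t :: real assume t: "t \<ge> 0"
    show "bounded_linear (\<lambda>x. P x + Q (V t x))"
      by (intro bounded_linear_add blP bounded_linear_compose[OF blQ Vbl[OF t]])
    show "P (sc c' x) + Q (V t (sc c' x)) = sc c' (P x + Q (V t x))" for c' x
      by (simp add: P_sc Q_sc Vsc[OF t] sc_add)
  next
    show "(\<lambda>x. P x + Q (V 0 x)) = id" using decomp by (auto simp: V0)
  next
    fix s t :: real assume s: "s \<ge> 0" and t: "t \<ge> 0"
    show "(\<lambda>x. P x + Q (V (s + t) x)) = (\<lambda>x. P x + Q (V s x)) \<circ> (\<lambda>x. P x + Q (V t x))"
    proof
      fix x
      define y where "y = V t x"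
      have lQ: "linear Q" by (rule bounded_linear.linear[OF blQ])
      have lV: "linear (V s)" by (rule bounded_linear.linear[OF Vbl[OF s]])
      have "V s (Q y) = V s y - P y"
        using linear_diff[OF lV, of y "P y"] VP[OF s] by (simp add: Q_def)
      then have "Q (V s (Q y)) = Q (V s y)"
        using linear_diff[OF lQ] QP by simp
      moreover have "Q (V s (P x + Q y)) = Q (V s (Q y))"
        using linear_add[OF lV] linear_add[OF lQ] VP[OF s] QP by simp
      moreover have "P (P x + Q y) = P x" by (simp add: P_add PP PQ)
      ultimately show "P x + Q (V (s + t) x) = ((\<lambda>x. P x + Q (V s x)) \<circ> (\<lambda>x. P x + Q (V t x))) x"
        using Vsg[OF s t] by (simp add: y_def)
    qed
  next
    fix x
    show "continuous_on {0..} (\<lambda>t. P x + Q (V t x))"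
      by (rule continuous_on_add[OF continuous_on_const bounded_linear.continuous_on[OF blQ Vcont]])
  qed
qed

end
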